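(* Let $X$ be a topological space with $|X|\ge 2$ and $G$ an infinite Abelian group. If $X$ is not anti-discrete, then every Korovin orbit $G_f$ in $X^G$ is a $T_1$-space.
   Context: $X^G$ carries the product topology. For $f\in X^G$ and $g\in G$ let $gf\in X^G$ be given by $(gf)(x)=f(xg)$, and let $G_f=\{gf:g\in G\}\subseteq X^G$ with the subspace topology. The map $f\colon G\to X$ is a Korovin mapping if $\pi_M(G_f)=X^M$ for every countable $M\subseteq G$, where $\pi_M\colon X^G\to X^M$ is the projection; in that case $G_f$ is called a Korovin orbit. A space is anti-discrete if its only open sets are $\emptyset$ and the whole space. *)

theory Defs
  imports "HOL-Analysis.Analysis"
begin

definition gshift :: "'g::ab_group_add \<Rightarrow> ('g \<Rightarrow> 'a) \<Rightarrow> ('g \<Rightarrow> 'a)" where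
  "gshift g f = (\<lambda>x. f (x + g))"

definition orbit :: "('g::ab_group_add \<Rightarrow> 'a) \<Rightarrow> ('g \<Rightarrow> 'a) set" where
  "orbit f = {gshift g f | g. True}"

definition korovin_mapping :: "'a topology \<Rightarrow> ('g::ab_group_add \<Rightarrow> 'a) \<Rightarrow> bool" where
  "korovin_mapping X f \<longleftrightarrow>
     (\<forall>x. f x \<in> topspace X) \<and>
     (\<forall>M. countable M \<longrightarrow> (\<lambda>h. restrict h M) ` orbit f = (PiE M (\<lambda>_. topspace X)))"

definition anti_discrete :: "'a topology \<Rightarrow> bool" where
  "anti_discrete X \<longleftrightarrow> (\<forall>U. openin X U \<longrightarrow> U = {} \<or> U = topspace X)"

end

theory Submission
  imports Defs
begin

theorem proposition4p1:
  fixes X :: "'a topology" and f :: "'g::ab_group_add \<Rightarrow> 'a"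
  assumes "\<exists>x y. x \<in> topspace X \<and> y \<in> topspace X \<and> x \<noteq> y"
    and "infinite (UNIV :: 'g set)"
    and "\<not> anti_discrete X"
    and "korovin_mapping X f"
  shows "t1_space (subtopology (product_topology (\<lambda>_::'g. X) UNIV) (orbit f))"
proof -
  let ?P = "product_topology (\<lambda>_::'g. X) UNIV"
  obtain U where U: "openin X U" "U \<noteq> {}" "U \<noteq> topspace X"
    using assms(3) unfolding anti_discrete_def by blast
  obtain u where u: "u \<in> U" using U by blast
  have Usub: "U \<subseteq> topspace X" using U(1) openin_subset by blast
  obtain v where v: "v \<in> topspace X" "v \<notin> U" using U Usub by blast
  have fX: "\<And>x. f x \<in> topspace X" and kor: "\<And>M. countable M \<Longrightarrow>
      (\<lambda>h. restrict h M) ` orbit f = PiE M (\<lambda>_. topspace X)"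
    using assms(4) unfolding korovin_mapping_def by auto
  show ?thesis unfolding t1_space_def
  proof (intro ballI impI)
    fix p q assume p: "p \<in> topspace (subtopology ?P (orbit f))"
      and q: "q \<in> topspace (subtopology ?P (orbit f))" and pq: "p \<noteq> q"
    from p obtain a where a: "p = gshift a f" by (auto simp: orbit_def)
    from q obtain b where b: "q = gshift b f" by (auto simp: orbit_def)
    have ab: "b - a \<noteq> 0" using pq a b by auto
    define M where "M = {0, b - a}"
    define k where "k = (\<lambda>x. if x = 0 then u else if x = b - a then v else undefined)"
    have "restrict k M \<in> PiE M (\<lambda>_. topspace X)"
      using u Usub v unfolding M_def k_def by (auto simp: PiE_iff)
    then have "restrict k M \<in> (\<lambda>h. restrict h M) ` orbit f"
      using kor[of M] unfolding M_def by auto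
    then obtain c where c: "restrict k M = restrict (gshift c f) M"
      by (auto simp: orbit_def)
    have c0: "f c = u"
      using fun_cong[OF c, of 0] ab unfolding M_def k_def gshift_def by auto
    have c1: "f (b - a + c) = v"
      using fun_cong[OF c, of "b - a"] ab unfolding M_def k_def gshift_def by auto
    define x where "x = c - a"
    define W where "W = {h \<in> topspace ?P. h x \<in> U}"
    have "openin ?P W"
      unfolding W_def
      by (rule openin_continuous_map_preimage[OF continuous_map_product_projection[of x UNIV "\<lambda>_. X"] U(1)]) simp
    then have "openin (subtopology ?P (orbit f)) (W \<inter> orbit f)"
      by (auto simp: openin_subtopology)
    moreover have "p \<in> W \<inter> orbit f"
      using p c0 u unfolding W_def x_def a gshift_def by auto
    moreover have "q \<notin> W \<inter> orbit f"
    proof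
      assume "q \<in> W \<inter> orbit f"
      then have "f (c - a + b) \<in> U" unfolding W_def x_def b gshift_def by auto
      moreover have "c - a + b = b - a + c" by (simp add: algebra_simps)
      ultimately show False using c1 v by simp
    qed
    ultimately show "\<exists>U. openin (subtopology ?P (orbit f)) U \<and> p \<in> U \<and> q \<notin> U" by blast
  qed
qed

end
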